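(* Let $(\Omega,\mathcal{F})$ be a measurable space, $\mathcal{P}$ a nonempty set of probability measures on it, $\hat{\mathbb{E}}[Z]=\sup_{P\in\mathcal{P}}E_P[Z]$, and let $X,Y$ be random variables with $\hat{\mathbb{E}}[X^2]+\hat{\mathbb{E}}[Y^2]<\infty$. Put $U=\frac{X+Y}{2}$ and $V=\frac{X-Y}{2}$. Then (i) $\overline{C}(X,Y)=\max_{\beta\in\mathbb{R}}\min_{\alpha\in\mathbb{R}}\hat{\mathbb{E}}[(U-\alpha)^2-(V-\beta)^2]$, and there exist $\alpha^*\in M_U$, $\beta^*\in M_V$ such that $\overline{C}(X,Y)=\hat{\mathbb{E}}[(U-\alpha^* )^2-(V-\beta^* )^2]$; (ii) $\underline{C}(X,Y)=\min_{\alpha\in\mathbb{R}}\max_{\beta\in\mathbb{R}}\left(-\hat{\mathbb{E}}[-(U-\alpha)^2+(V-\beta)^2]\right)$, and there exist $\alpha^*\in M_U$, $\beta^*\in M_V$ such that $\underline{C}(X,Y)=-\hat{\mathbb{E}}[-(U-\alpha^* )^2+(V-\beta^* )^2]$.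
   Context: For a random variable $W$ with $\hat{\mathbb{E}}[W^2]<\infty$: $\overline{\mu}_W=\hat{\mathbb{E}}[W]$, $\underline{\mu}_W=-\hat{\mathbb{E}}[-W]$, $M_W=[\underline{\mu}_W,\overline{\mu}_W]$. Upper covariance $\overline{C}(X,Y)=\max_{\mu_2\in M_Y}\min_{\mu_1\in M_X}\hat{\mathbb{E}}[(X-\mu_1)(Y-\mu_2)]$; lower covariance $\underline{C}(X,Y)=\min_{\mu_2\in M_Y}\max_{\mu_1\in M_X}\left(-\hat{\mathbb{E}}[-(X-\mu_1)(Y-\mu_2)]\right)$. *)

theory Defs
  imports "HOL-Probability.Probability"
begin

definition sub_exp :: "'a measure set \<Rightarrow> ('a \<Rightarrow> real) \<Rightarrow> real" where
  "sub_exp Ps Z = (SUP P\<in>Ps. integral\<^sup>L P Z)"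

definition upper_mean :: "'a measure set \<Rightarrow> ('a \<Rightarrow> real) \<Rightarrow> real" where
  "upper_mean Ps W = sub_exp Ps W"

definition lower_mean :: "'a measure set \<Rightarrow> ('a \<Rightarrow> real) \<Rightarrow> real" where
  "lower_mean Ps W = - sub_exp Ps (\<lambda>w. - W w)"

definition mean_set :: "'a measure set \<Rightarrow> ('a \<Rightarrow> real) \<Rightarrow> real set" where
  "mean_set Ps W = {lower_mean Ps W .. upper_mean Ps W}"

definition upper_cov :: "'a measure set \<Rightarrow> ('a \<Rightarrow> real) \<Rightarrow> ('a \<Rightarrow> real) \<Rightarrow> real" where
  "upper_cov Ps X Y = (SUP m2\<in>mean_set Ps Y. INF m1\<in>mean_set Ps X.
       sub_exp Ps (\<lambda>w. (X w - m1) * (Y w - m2)))"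

definition lower_cov :: "'a measure set \<Rightarrow> ('a \<Rightarrow> real) \<Rightarrow> ('a \<Rightarrow> real) \<Rightarrow> real" where
  "lower_cov Ps X Y = (INF m2\<in>mean_set Ps Y. SUP m1\<in>mean_set Ps X.
       - sub_exp Ps (\<lambda>w. - ((X w - m1) * (Y w - m2))))"

text \<open>v = max_{b in R} min_{a in R} F b a, with all the max/min attained.\<close>
definition is_maxmin :: "real \<Rightarrow> (real \<Rightarrow> real \<Rightarrow> real) \<Rightarrow> bool" where
  "is_maxmin v F \<longleftrightarrow>
     (\<forall>b. \<exists>a0. \<forall>a. F b a0 \<le> F b a) \<and>
     (\<exists>b0. (INF a. F b0 a) = v) \<and> (\<forall>b. (INF a. F b a) \<le> v)"

text \<open>v = min_{a in R} max_{b in R} F a b, with all the min/max attained.\<close>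
definition is_minmax :: "real \<Rightarrow> (real \<Rightarrow> real \<Rightarrow> real) \<Rightarrow> bool" where
  "is_minmax v F \<longleftrightarrow>
     (\<forall>a. \<exists>b0. \<forall>b. F a b \<le> F a b0) \<and>
     (\<exists>a0. (SUP b. F a0 b) = v) \<and> (\<forall>a. v \<le> (SUP b. F a b))"

end

theory Submission
  imports Defs
begin

lemma quad_convex:
  fixes k A B p1 p2 t c :: real
  assumes "k \<ge> 0" "p1 \<le> t" "t \<le> p2" "k*p1^2+B*p1+A \<le> c" "k*p2^2+B*p2+A \<le> c"
  shows "k*t^2+B*t+A \<le> c"
proof (cases "p1 = p2")
  case True then show ?thesis using assms by auto
next
  case False
  hence lt: "p1 < p2" using assms by auto
  have id: "(p2-t)*(k*p1^2+B*p1+A) + (t-p1)*(k*p2^2+B*p2+A) - (p2-p1)*(k*t^2+B*t+A)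
      = k*((p2-p1)*(t-p1)*(p2-t))" by (simp add: power2_eq_square algebra_simps)
  have "0 \<le> k*((p2-p1)*(t-p1)*(p2-t))" using assms lt by simp
  hence "(p2-p1)*(k*t^2+B*t+A) \<le> (p2-t)*(k*p1^2+B*p1+A) + (t-p1)*(k*p2^2+B*p2+A)"
    using id by linarith
  also have "\<dots> \<le> (p2-t)*c + (t-p1)*c"
    using assms by (intro add_mono mult_left_mono) auto
  also have "\<dots> = (p2-p1)*c" by (simp add: algebra_simps)
  finally show ?thesis using lt by simp
qed

lemma helly1d:
  fixes A B :: "'p \<Rightarrow> real" and k lo hi c :: real
  assumes k: "k \<ge> 0" and ne: "Ps \<noteq> {}"
    and pair: "\<And>P Q. P\<in>Ps \<Longrightarrow> Q\<in>Ps \<Longrightarrow> \<exists>t\<in>{lo..hi}. k*t^2+B P*t+A P \<le> c \<and> k*t^2+B Q*t+A Q \<le> c"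
  shows "\<exists>t\<in>{lo..hi}. \<forall>P\<in>Ps. k*t^2+B P*t+A P \<le> c"
proof -
  define J where "J P = {lo..hi} \<inter> {t. k*t^2+B P*t+A P \<le> c}" for P
  have Jne: "J P \<noteq> {}" if "P \<in> Ps" for P using pair[OF that that] unfolding J_def by auto
  have Jcl: "closed (J P)" for P
    unfolding J_def by (intro closed_Int closed_atLeastAtMost closed_Collect_le continuous_intros)
  have Jsub: "J P \<subseteq> {lo..hi}" for P unfolding J_def by auto
  have Jbb: "bdd_below (J P)" for P by (rule bdd_below_mono[OF _ Jsub]) simp
  have Jba: "bdd_above (J P)" for P by (rule bdd_above_mono[OF _ Jsub]) simp
  have Jinf: "Inf (J P) \<in> J P" if "P \<in> Ps" for P by (rule closed_contains_Inf[OF Jne[OF that] Jbb Jcl])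
  have Jsup: "Sup (J P) \<in> J P" if "P \<in> Ps" for P by (rule closed_contains_Sup[OF Jne[OF that] Jba Jcl])
  have Jint: "t \<in> J P" if "P \<in> Ps" "Inf (J P) \<le> t" "t \<le> Sup (J P)" for P t
  proof -
    have a: "Inf (J P) \<in> {lo..hi}" "k*(Inf (J P))^2+B P*(Inf (J P))+A P \<le> c"
      using Jinf[OF that(1)] unfolding J_def by auto
    have b: "Sup (J P) \<in> {lo..hi}" "k*(Sup (J P))^2+B P*(Sup (J P))+A P \<le> c"
      using Jsup[OF that(1)] unfolding J_def by auto
    have "k*t^2+B P*t+A P \<le> c" using quad_convex[OF k that(2,3) a(2) b(2)] .
    moreover have "t \<in> {lo..hi}" using a b that by auto
    ultimately show ?thesis unfolding J_def by auto
  qed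
  define ts where "ts = (SUP P\<in>Ps. Inf (J P))"
  have bdd: "bdd_above ((\<lambda>P. Inf (J P)) ` Ps)"
    using Jinf Jsub by (intro bdd_aboveI[where M=hi]) fastforce
  have tsJ: "ts \<in> J Q" if Q: "Q \<in> Ps" for Q
  proof (rule Jint[OF Q])
    show "Inf (J Q) \<le> ts" unfolding ts_def by (rule cSUP_upper[OF Q bdd])
    show "ts \<le> Sup (J Q)" unfolding ts_def
    proof (rule cSUP_least[OF ne])
      fix P assume P: "P \<in> Ps"
      obtain s where s: "s \<in> J P" "s \<in> J Q" using pair[OF P Q] unfolding J_def by auto
      have "Inf (J P) \<le> s" by (rule cInf_lower[OF s(1) Jbb])
      also have "s \<le> Sup (J Q)" by (rule cSup_upper[OF s(2) Jba])
      finally show "Inf (J P) \<le> Sup (J Q)" .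
    qed
  qed
  obtain Q where Q: "Q \<in> Ps" using ne by auto
  have "ts \<in> {lo..hi}" using tsJ[OF Q] Jsub[of Q] by blast
  moreover have "\<forall>P\<in>Ps. k*ts^2+B P*ts+A P \<le> c" using tsJ unfolding J_def by auto
  ultimately show ?thesis by blast
qed

lemma quad_expand:
  fixes k A B t r :: real
  shows "k*t^2+B*t+A = (k*r^2+B*r+A) + (2*k*r+B)*(t-r) + k*(t-r)^2"
  by (simp add: power2_eq_square algebra_simps)

lemma two_aux:
  fixes k A1 B1 A2 B2 lo hi c p1 p2 :: real
  assumes k: "k \<ge> 0" and s: "p1 < p2" "p1 \<in> {lo..hi}" "p2 \<in> {lo..hi}"
    and f1: "k*p1^2+B1*p1+A1 \<le> c" and f2: "k*p2^2+B2*p2+A2 \<le> c"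
    and dis: "\<And>t. t\<in>{lo..hi} \<Longrightarrow> k*t^2+B1*t+A1 > c \<or> k*t^2+B2*t+A2 > c"
  shows "\<exists>l. 0 \<le> l \<and> l \<le> 1 \<and> (\<forall>t\<in>{lo..hi}. l*(k*t^2+B1*t+A1) + (1-l)*(k*t^2+B2*t+A2) > c)"
proof -
  have g1: "k*p2^2+B1*p2+A1 > c" using dis[OF s(3)] f2 by auto
  have g2: "k*p1^2+B2*p1+A2 > c" using dis[OF s(2)] f1 by auto
  have D1: "(B1-B2)*p1 + (A1-A2) < 0" using f1 g2 by (simp add: algebra_simps)
  have D2: "(B1-B2)*p2 + (A1-A2) > 0" using f2 g1 by (simp add: algebra_simps)
  have Bpos: "B1 - B2 > 0"
  proof (rule ccontr)
    assume "\<not> B1 - B2 > 0"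
    hence "(B1-B2)*p2 \<le> (B1-B2)*p1" using s(1) by (intro mult_left_mono_neg) auto
    thus False using D1 D2 by linarith
  qed
  define r where "r = (A2 - A1)/(B1 - B2)"
  have rD: "(B1-B2)*r + (A1-A2) = 0" using Bpos unfolding r_def by (simp add: field_simps)
  have Dt: "(k*t^2+B1*t+A1) - (k*t^2+B2*t+A2) = (B1-B2)*(t-r)" for t
    using rD by (simp add: algebra_simps)
  have "(B1-B2)*(p1-r) < 0" using Dt[of p1] f1 g2 by linarith
  hence "p1 < r" using Bpos by (simp add: mult_less_0_iff)
  have "(B1-B2)*(p2-r) > 0" using Dt[of p2] f2 g1 by linarith
  hence "r < p2" using Bpos by (simp add: zero_less_mult_iff)
  have rI: "r \<in> {lo..hi}" using \<open>p1 < r\<close> \<open>r < p2\<close> s by auto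
  define w where "w = k*r^2+B1*r+A1"
  have w2: "k*r^2+B2*r+A2 = w" using Dt[of r] unfolding w_def by simp
  have wc: "w > c" using dis[OF rI] w2 unfolding w_def by auto
  define d1 where "d1 = 2*k*r+B1"
  define d2 where "d2 = 2*k*r+B2"
  have e1: "k*t^2+B1*t+A1 = w + d1*(t-r) + k*(t-r)^2" for t
    unfolding w_def d1_def by (rule quad_expand)
  have e2: "k*t^2+B2*t+A2 = w + d2*(t-r) + k*(t-r)^2" for t
    using quad_expand[where k=k and B=B2 and A=A2 and t=t and r=r] w2 unfolding d2_def by simp
  have d12: "d1 - d2 = B1 - B2" unfolding d1_def d2_def by simp
  show ?thesis
  proof (cases "d2 \<ge> 0")
    case True
    have "k*t^2+B2*t+A2 > c" if t: "t \<in> {lo..hi}" for t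
    proof (cases "t \<ge> r")
      case True
      have "d2*(t-r) \<ge> 0" "k*(t-r)^2 \<ge> 0" using \<open>d2 \<ge> 0\<close> True k by auto
      then show ?thesis using e2[of t] wc by linarith
    next
      case False
      have "(B1-B2)*(t-r) < 0" using False Bpos by (simp add: mult_pos_neg)
      then show ?thesis using Dt[of t] dis[OF t] by linarith
    qed
    then show ?thesis by (intro exI[of _ 0]) auto
  next
    case d2neg: False
    show ?thesis
    proof (cases "d1 \<le> 0")
      case True
      have "k*t^2+B1*t+A1 > c" if t: "t \<in> {lo..hi}" for t
      proof (cases "t \<le> r")
        case True
        have "d1*(t-r) \<ge> 0" "k*(t-r)^2 \<ge> 0" using \<open>d1 \<le> 0\<close> True k
          by (auto simp: mult_nonpos_nonpos)
        then show ?thesis using e1[of t] wc by linarith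
      next
        case False
        have "(B1-B2)*(t-r) > 0" using False Bpos by simp
        then show ?thesis using Dt[of t] dis[OF t] by linarith
      qed
      then show ?thesis by (intro exI[of _ 1]) auto
    next
      case False
      define l where "l = - d2 / (d1 - d2)"
      have dpos: "d1 - d2 > 0" using False d2neg by auto
      have l0: "0 \<le> l" "l \<le> 1" unfolding l_def using dpos d2neg False by (auto simp: field_simps)
      have ld: "l*d1 + (1-l)*d2 = 0" unfolding l_def using dpos by (simp add: field_simps)
      have "l*(k*t^2+B1*t+A1) + (1-l)*(k*t^2+B2*t+A2) > c" for t
      proof -
        have "l*(k*t^2+B1*t+A1) + (1-l)*(k*t^2+B2*t+A2)
              = w + (l*d1 + (1-l)*d2)*(t-r) + k*(t-r)^2"
          unfolding e1 e2 by (simp add: algebra_simps)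
        also have "\<dots> = w + k*(t-r)^2" using ld by simp
        also have "\<dots> \<ge> w" using k by simp
        finally show ?thesis using wc by linarith
      qed
      then show ?thesis using l0 by blast
    qed
  qed
qed

lemma minimax1d:
  fixes A B :: "'p \<Rightarrow> real" and k lo hi c :: real
  assumes k: "k \<ge> 0"
    and cov: "\<And>t. t\<in>{lo..hi} \<Longrightarrow> \<exists>P\<in>Ps. k*t^2+B P*t+A P > c"
    and lohi: "lo \<le> hi"
  shows "\<exists>P1\<in>Ps. \<exists>P2\<in>Ps. \<exists>l. 0 \<le> l \<and> l \<le> 1 \<and>
     (\<forall>t\<in>{lo..hi}. l*(k*t^2+B P1*t+A P1) + (1-l)*(k*t^2+B P2*t+A P2) > c)"
proof -
  have ne: "Ps \<noteq> {}" using cov[of lo] lohi by auto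
  have "\<exists>P1\<in>Ps. \<exists>P2\<in>Ps. \<forall>t\<in>{lo..hi}. k*t^2+B P1*t+A P1 > c \<or> k*t^2+B P2*t+A P2 > c"
  proof (rule ccontr)
    assume na: "\<not> ?thesis"
    have pr: "\<exists>t\<in>{lo..hi}. k*t^2+B P*t+A P \<le> c \<and> k*t^2+B Q*t+A Q \<le> c" if "P\<in>Ps" "Q\<in>Ps" for P Q
      using na that by (auto simp: not_less)
    from helly1d[of k Ps lo hi B A c, OF k ne pr] obtain t where "t\<in>{lo..hi}" "\<forall>P\<in>Ps. k*t^2+B P*t+A P \<le> c"
      by blast
    then show False using cov by fastforce
  qed
  then obtain P1 P2 where P: "P1 \<in> Ps" "P2 \<in> Ps"
    and dis: "\<forall>t\<in>{lo..hi}. k*t^2+B P1*t+A P1 > c \<or> k*t^2+B P2*t+A P2 > c" by blast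
  show ?thesis
  proof (cases "\<forall>t\<in>{lo..hi}. k*t^2+B P1*t+A P1 > c")
    case True then show ?thesis using P by (intro bexI[OF _ P(1)] bexI[OF _ P(2)] exI[of _ 1]) auto
  next
    case F1: False
    show ?thesis
    proof (cases "\<forall>t\<in>{lo..hi}. k*t^2+B P2*t+A P2 > c")
      case True then show ?thesis using P by (intro bexI[OF _ P(1)] bexI[OF _ P(2)] exI[of _ 0]) auto
    next
      case F2: False
      obtain p1 where p1: "p1 \<in> {lo..hi}" "k*p1^2+B P1*p1+A P1 \<le> c" using F1 by (auto simp: not_less)
      obtain p2 where p2: "p2 \<in> {lo..hi}" "k*p2^2+B P2*p2+A P2 \<le> c" using F2 by (auto simp: not_less)
      have "p1 \<noteq> p2" using dis p1 p2 by fastforce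
      show ?thesis
      proof (cases "p1 < p2")
        case True
        from two_aux[OF k True p1(1) p2(1) p1(2) p2(2)] dis show ?thesis using P by blast
      next
        case False
        hence lt: "p2 < p1" using \<open>p1 \<noteq> p2\<close> by auto
        from two_aux[OF k lt p2(1) p1(1) p2(2) p1(2)] dis
        obtain l where l: "0 \<le> l" "l \<le> 1"
          "\<forall>t\<in>{lo..hi}. l*(k*t^2+B P2*t+A P2) + (1-l)*(k*t^2+B P1*t+A P1) > c" by blast
        have "\<forall>t\<in>{lo..hi}. (1-l)*(k*t^2+B P1*t+A P1) + (1-(1-l))*(k*t^2+B P2*t+A P2) > c"
        proof
          fix t assume t: "t \<in> {lo..hi}"
          have "l*(k*t^2+B P2*t+A P2) + (1-l)*(k*t^2+B P1*t+A P1) > c" using l(3) t by blast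
          then show "(1-l)*(k*t^2+B P1*t+A P1) + (1-(1-l))*(k*t^2+B P2*t+A P2) > c" by simp
        qed
        moreover have "0 \<le> 1-l" "1-l \<le> 1" using l by auto
        ultimately show ?thesis using P by blast
      qed
    qed
  qed
qed


definition "qf x y a P m1 m2 = (a P - m2 * x P - m1 * y P + m1 * m2 :: real)"
definition "gf Ps x y a m1 m2 = (SUP P\<in>Ps. qf x y a P m1 m2)"
definition "lof Ps z = - (SUP P\<in>Ps. - z P :: real)"
definition "hif Ps z = (SUP P\<in>Ps. z P :: real)"
definition "uf x y P = ((x P + y P)/2 :: real)"
definition "vf x y P = ((x P - y P)/2 :: real)"
definition "Cf Ps x y a = (SUP m2\<in>{lof Ps y..hif Ps y}. INF m1\<in>{lof Ps x..hif Ps x}. gf Ps x y a m1 m2)"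

lemma bnd_lohi:
  fixes z :: "'p \<Rightarrow> real"
  assumes ne: "Ps \<noteq> {}" and b: "\<And>P. P \<in> Ps \<Longrightarrow> \<bar>z P\<bar> \<le> K"
  shows "\<And>P. P \<in> Ps \<Longrightarrow> z P \<in> {lof Ps z..hif Ps z}" and "-K \<le> lof Ps z" and "hif Ps z \<le> K"
    and "lof Ps z \<le> hif Ps z"
proof -
  have b1: "bdd_above (z ` Ps)" using b by (intro bdd_aboveI[where M=K]) (auto simp: abs_le_iff)
  have b2: "bdd_above ((\<lambda>P. - z P) ` Ps)" using b by (intro bdd_aboveI[where M=K]) (auto simp: abs_le_iff)
  show m: "z P \<in> {lof Ps z..hif Ps z}" if "P \<in> Ps" for P
    using cSUP_upper[OF that b1] cSUP_upper[OF that b2] unfolding lof_def hif_def by auto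
  show "hif Ps z \<le> K" unfolding hif_def using b ne by (intro cSUP_least) (auto simp: abs_le_iff)
  have "(SUP P\<in>Ps. - z P) \<le> K" using b ne by (intro cSUP_least) (auto simp: abs_le_iff)
  then show "-K \<le> lof Ps z" unfolding lof_def by simp
  obtain P where "P \<in> Ps" using ne by auto
  then show "lof Ps z \<le> hif Ps z" using m by fastforce
qed

locale core =
  fixes Ps :: "'p set" and x y a :: "'p \<Rightarrow> real" and K :: real
  assumes ne: "Ps \<noteq> {}"
    and bx: "\<And>P. P \<in> Ps \<Longrightarrow> \<bar>x P\<bar> \<le> K"
    and bY: "\<And>P. P \<in> Ps \<Longrightarrow> \<bar>y P\<bar> \<le> K"
    and bA: "\<And>P. P \<in> Ps \<Longrightarrow> \<bar>a P\<bar> \<le> K"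
begin

abbreviation "q \<equiv> qf x y a"
abbreviation "g \<equiv> gf Ps x y a"
abbreviation "f \<equiv> (\<lambda>\<alpha> \<beta>. gf Ps x y a (\<alpha>+\<beta>) (\<alpha>-\<beta>))"
abbreviation "u \<equiv> uf x y"
abbreviation "v \<equiv> vf x y"

lemma K0: "0 \<le> K" using ne bx by fastforce

lemma bu: "P \<in> Ps \<Longrightarrow> \<bar>u P\<bar> \<le> K" using bx[of P] bY[of P] by (simp add: abs_le_iff uf_def)
lemma bv: "P \<in> Ps \<Longrightarrow> \<bar>v P\<bar> \<le> K" using bx[of P] bY[of P] by (simp add: abs_le_iff vf_def)

lemma q_abs: "P \<in> Ps \<Longrightarrow> \<bar>q P m1 m2\<bar> \<le> K + \<bar>m2\<bar>*K + \<bar>m1\<bar>*K + \<bar>m1\<bar>*\<bar>m2\<bar>"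
proof -
  assume P: "P \<in> Ps"
  have "\<bar>q P m1 m2\<bar> \<le> \<bar>a P\<bar> + \<bar>m2\<bar>*\<bar>x P\<bar> + \<bar>m1\<bar>*\<bar>y P\<bar> + \<bar>m1\<bar>*\<bar>m2\<bar>"
    unfolding qf_def by (simp add: abs_mult[symmetric])
  also have "\<dots> \<le> K + \<bar>m2\<bar>*K + \<bar>m1\<bar>*K + \<bar>m1\<bar>*\<bar>m2\<bar>"
    using bx[OF P] bY[OF P] bA[OF P] by (intro add_mono mult_left_mono) auto
  finally show ?thesis .
qed

lemma q_bdd: "bdd_above ((\<lambda>P. q P m1 m2) ` Ps)"
  using q_abs by (intro bdd_aboveI[where M="K + \<bar>m2\<bar>*K + \<bar>m1\<bar>*K + \<bar>m1\<bar>*\<bar>m2\<bar>"]) (auto simp: abs_le_iff)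

lemma g_ge: "P \<in> Ps \<Longrightarrow> q P m1 m2 \<le> g m1 m2"
  unfolding gf_def by (rule cSUP_upper[OF _ q_bdd])

lemma g_lessI: "c < g m1 m2 \<Longrightarrow> \<exists>P\<in>Ps. c < q P m1 m2"
  unfolding gf_def using less_cSUP_iff[OF ne q_bdd] by blast

lemma g_le: "(\<And>P. P \<in> Ps \<Longrightarrow> q P m1 m2 \<le> c) \<Longrightarrow> g m1 m2 \<le> c"
  unfolding gf_def using ne by (intro cSUP_least) auto

lemma qF: "q P (\<alpha>+\<beta>) (\<alpha>-\<beta>) = (\<alpha> - u P)^2 - (\<beta> - v P)^2 + (a P - x P * y P)"
  unfolding qf_def uf_def vf_def by (simp add: power2_eq_square field_simps)

lemma qF2: "q P (\<alpha>+\<beta>) (\<alpha>-\<beta>) = 1*\<alpha>^2 + (-2 * u P)*\<alpha> + (a P - \<beta>^2 + 2*\<beta> * v P)"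
  unfolding qf_def uf_def vf_def by (simp add: power2_eq_square field_simps)

lemma qG: "q P m1 m2 = 0*m1^2 + (m2 - y P)*m1 + (a P - m2 * x P)"
  unfolding qf_def by (simp add: algebra_simps)

lemma f_lower: "- ((K + \<bar>\<beta>\<bar>)^2) - K - K*K \<le> f \<alpha> \<beta>"
proof -
  obtain P where P: "P \<in> Ps" using ne by auto
  have "\<bar>\<beta> - v P\<bar> \<le> \<bar>\<beta>\<bar> + \<bar>v P\<bar>" by (rule abs_triangle_ineq4)
  hence "\<bar>\<beta> - v P\<bar> \<le> K + \<bar>\<beta>\<bar>" using bv[OF P] by linarith
  hence "(\<beta> - v P)^2 \<le> (K + \<bar>\<beta>\<bar>)^2"
    using K0 by (intro power2_le_iff_abs_le[THEN iffD2]) auto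
  moreover have "x P * y P \<le> K*K"
    using bx[OF P] bY[OF P] by (smt (verit) abs_mult abs_le_iff mult_mono abs_ge_zero)
  moreover have "a P \<ge> -K" using bA[OF P] by (simp add: abs_le_iff)
  ultimately have "- ((K + \<bar>\<beta>\<bar>)^2) - K - K*K \<le> q P (\<alpha>+\<beta>) (\<alpha>-\<beta>)" unfolding qF
    by (smt (verit) zero_le_power2)
  then show ?thesis using g_ge[OF P, of "\<alpha>+\<beta>" "\<alpha>-\<beta>"] by linarith
qed

lemma f_bdd: "bdd_below (range (\<lambda>\<alpha>. f \<alpha> \<beta>))"
  using f_lower by (intro bdd_belowI[where m="- ((K + \<bar>\<beta>\<bar>)^2) - K - K*K"]) auto


lemma f_lip_beta: "f \<alpha> \<beta> \<le> f \<alpha> \<beta>' + \<bar>\<beta> - \<beta>'\<bar> * (\<bar>\<beta>\<bar> + \<bar>\<beta>'\<bar> + 2*K)"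
proof (rule g_le)
  fix P assume P: "P \<in> Ps"
  have "q P (\<alpha>+\<beta>) (\<alpha>-\<beta>) - q P (\<alpha>+\<beta>') (\<alpha>-\<beta>') = (\<beta> - \<beta>') * (2 * v P - \<beta> - \<beta>')"
    unfolding qf_def uf_def vf_def by (simp add: power2_eq_square field_simps)
  also have "\<dots> \<le> \<bar>\<beta> - \<beta>'\<bar> * (\<bar>\<beta>\<bar> + \<bar>\<beta>'\<bar> + 2*K)"
  proof -
    have "\<bar>2 * v P - \<beta> - \<beta>'\<bar> \<le> \<bar>\<beta>\<bar> + \<bar>\<beta>'\<bar> + 2*K" using bv[OF P] by (smt (verit))
    hence "\<bar>(\<beta> - \<beta>') * (2 * v P - \<beta> - \<beta>')\<bar> \<le> \<bar>\<beta> - \<beta>'\<bar> * (\<bar>\<beta>\<bar> + \<bar>\<beta>'\<bar> + 2*K)"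
      by (simp add: abs_mult mult_left_mono)
    then show ?thesis by linarith
  qed
  finally show "q P (\<alpha>+\<beta>) (\<alpha>-\<beta>) \<le> f \<alpha> \<beta>' + \<bar>\<beta> - \<beta>'\<bar> * (\<bar>\<beta>\<bar> + \<bar>\<beta>'\<bar> + 2*K)"
    using g_ge[OF P, of "\<alpha>+\<beta>'" "\<alpha>-\<beta>'"] by linarith
qed

lemma f_lip_alpha: "f \<alpha> \<beta> \<le> f \<alpha>' \<beta> + \<bar>\<alpha> - \<alpha>'\<bar> * (\<bar>\<alpha>\<bar> + \<bar>\<alpha>'\<bar> + 2*K)"
proof (rule g_le)
  fix P assume P: "P \<in> Ps"
  have "q P (\<alpha>+\<beta>) (\<alpha>-\<beta>) - q P (\<alpha>'+\<beta>) (\<alpha>'-\<beta>) = (\<alpha> - \<alpha>') * (\<alpha> + \<alpha>' - 2 * u P)"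
    unfolding qf_def uf_def vf_def by (simp add: power2_eq_square field_simps)
  also have "\<dots> \<le> \<bar>\<alpha> - \<alpha>'\<bar> * (\<bar>\<alpha>\<bar> + \<bar>\<alpha>'\<bar> + 2*K)"
  proof -
    have "\<bar>\<alpha> + \<alpha>' - 2 * u P\<bar> \<le> \<bar>\<alpha>\<bar> + \<bar>\<alpha>'\<bar> + 2*K" using bu[OF P] by (smt (verit))
    hence "\<bar>(\<alpha> - \<alpha>') * (\<alpha> + \<alpha>' - 2 * u P)\<bar> \<le> \<bar>\<alpha> - \<alpha>'\<bar> * (\<bar>\<alpha>\<bar> + \<bar>\<alpha>'\<bar> + 2*K)"
      by (simp add: abs_mult mult_left_mono)
    then show ?thesis by linarith
  qed
  finally show "q P (\<alpha>+\<beta>) (\<alpha>-\<beta>) \<le> f \<alpha>' \<beta> + \<bar>\<alpha> - \<alpha>'\<bar> * (\<bar>\<alpha>\<bar> + \<bar>\<alpha>'\<bar> + 2*K)"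
    using g_ge[OF P, of "\<alpha>'+\<beta>" "\<alpha>'-\<beta>"] by linarith
qed

lemma lip_cont:
  fixes F :: "real \<Rightarrow> real" and lo hi :: real
  assumes "\<And>s t. s \<in> {lo..hi} \<Longrightarrow> t \<in> {lo..hi} \<Longrightarrow> F s \<le> F t + \<bar>s - t\<bar> * (\<bar>s\<bar> + \<bar>t\<bar> + 2*K)"
  shows "continuous_on {lo..hi} F"
proof (rule lipschitz_on_continuous_on)
  let ?L = "2*(\<bar>lo\<bar> + \<bar>hi\<bar>) + 2*K"
  show "?L-lipschitz_on {lo..hi} F"
    unfolding lipschitz_on_def
  proof (intro conjI ballI)
    show "0 \<le> ?L" using K0 by simp
    fix s t assume st: "s \<in> {lo..hi}" "t \<in> {lo..hi}"
    have bs: "\<bar>s\<bar> + \<bar>t\<bar> + 2*K \<le> ?L" using st by (auto simp: abs_le_iff)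
    have "\<bar>s - t\<bar> * (\<bar>s\<bar> + \<bar>t\<bar> + 2*K) \<le> ?L * \<bar>s - t\<bar>"
      using mult_left_mono[OF bs, of "\<bar>s-t\<bar>"] by (simp add: mult.commute)
    moreover have "\<bar>t - s\<bar> * (\<bar>t\<bar> + \<bar>s\<bar> + 2*K) \<le> ?L * \<bar>s - t\<bar>"
      using mult_left_mono[OF bs, of "\<bar>s-t\<bar>"] by (simp add: mult.commute abs_minus_commute add.commute)
    ultimately show "dist (F s) (F t) \<le> ?L * dist s t"
      using assms[OF st] assms[OF st(2,1)] by (simp add: dist_real_def abs_le_iff)
  qed
qed

definition "ul = lof Ps u"
definition "uh = hif Ps u"
definition "vl = lof Ps v"
definition "vh = hif Ps v"

lemma u_lohi: "P \<in> Ps \<Longrightarrow> u P \<in> {ul..uh}" "ul \<le> uh"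
  using bnd_lohi[of Ps u K, OF ne bu] unfolding ul_def uh_def by auto
lemma v_lohi: "P \<in> Ps \<Longrightarrow> v P \<in> {vl..vh}" "vl \<le> vh"
  using bnd_lohi[of Ps v K, OF ne bv] unfolding vl_def vh_def by auto
lemma x_lohi: "P \<in> Ps \<Longrightarrow> x P \<in> {lof Ps x..hif Ps x}" "lof Ps x \<le> hif Ps x"
  using bnd_lohi[of Ps x K, OF ne bx] by auto
lemma y_lohi: "P \<in> Ps \<Longrightarrow> y P \<in> {lof Ps y..hif Ps y}" "lof Ps y \<le> hif Ps y"
  using bnd_lohi[of Ps y K, OF ne bY] by auto
lemma x_K: "-K \<le> lof Ps x" "hif Ps x \<le> K" using bnd_lohi[of Ps x K, OF ne bx] by auto

lemma f_mono_lo: "\<alpha> \<le> ul \<Longrightarrow> f ul \<beta> \<le> f \<alpha> \<beta>"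
proof (rule g_le)
  fix P assume a: "\<alpha> \<le> ul" and P: "P \<in> Ps"
  have "ul \<le> u P" using u_lohi(1)[OF P] by auto
  hence "(u P - ul)^2 \<le> (u P - \<alpha>)^2" using a by (intro power_mono) auto
  hence "(ul - u P)^2 \<le> (\<alpha> - u P)^2" by (simp add: power2_commute)
  hence "q P (ul+\<beta>) (ul-\<beta>) \<le> q P (\<alpha>+\<beta>) (\<alpha>-\<beta>)" unfolding qF by linarith
  then show "q P (ul+\<beta>) (ul-\<beta>) \<le> f \<alpha> \<beta>" using g_ge[OF P] by (meson order_trans)
qed

lemma f_mono_hi: "uh \<le> \<alpha> \<Longrightarrow> f uh \<beta> \<le> f \<alpha> \<beta>"
proof (rule g_le)
  fix P assume a: "uh \<le> \<alpha>" and P: "P \<in> Ps"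
  have "u P \<le> uh" using u_lohi(1)[OF P] by auto
  hence "(uh - u P)^2 \<le> (\<alpha> - u P)^2" using a by (intro power_mono) auto
  hence "q P (uh+\<beta>) (uh-\<beta>) \<le> q P (\<alpha>+\<beta>) (\<alpha>-\<beta>)" unfolding qF by linarith
  then show "q P (uh+\<beta>) (uh-\<beta>) \<le> f \<alpha> \<beta>" using g_ge[OF P] by (meson order_trans)
qed

lemma f_min: "\<exists>\<alpha>0\<in>{ul..uh}. \<forall>\<alpha>. f \<alpha>0 \<beta> \<le> f \<alpha> \<beta>"
proof -
  have "continuous_on {ul..uh} (\<lambda>\<alpha>. f \<alpha> \<beta>)" by (rule lip_cont) (rule f_lip_alpha)
  from continuous_attains_inf[OF compact_Icc _ this] u_lohi(2)
  obtain \<alpha>0 where a0: "\<alpha>0 \<in> {ul..uh}" "\<And>\<alpha>. \<alpha> \<in> {ul..uh} \<Longrightarrow> f \<alpha>0 \<beta> \<le> f \<alpha> \<beta>" by auto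
  have "f \<alpha>0 \<beta> \<le> f \<alpha> \<beta>" for \<alpha>
  proof -
    consider "\<alpha> < ul" | "\<alpha> \<in> {ul..uh}" | "uh < \<alpha>" by fastforce
    then show ?thesis
    proof cases
      case 1 then show ?thesis using a0(2)[of ul] u_lohi(2) f_mono_lo[of \<alpha> \<beta>] by auto
    next
      case 2 then show ?thesis using a0(2) by auto
    next
      case 3 then show ?thesis using a0(2)[of uh] u_lohi(2) f_mono_hi[of \<alpha> \<beta>] by auto
    qed
  qed
  then show ?thesis using a0(1) by blast
qed


lemma mix_in: "z1 \<in> {lo..hi} \<Longrightarrow> z2 \<in> {lo..hi} \<Longrightarrow> 0 \<le> l \<Longrightarrow> l \<le> (1::real) \<Longrightarrow>
   l*z1 + (1-l)*z2 \<in> {lo..hi}"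
proof -
  assume a: "z1 \<in> {lo..hi}" "z2 \<in> {lo..hi}" "0 \<le> l" "l \<le> 1"
  have "l*lo \<le> l*z1" "(1-l)*lo \<le> (1-l)*z2" "l*z1 \<le> l*hi" "(1-l)*z2 \<le> (1-l)*hi"
    using a by (auto intro!: mult_left_mono)
  then show ?thesis by (auto simp: algebra_simps)
qed

lemma f_ge_mix: "P1 \<in> Ps \<Longrightarrow> P2 \<in> Ps \<Longrightarrow> 0 \<le> l \<Longrightarrow> l \<le> 1 \<Longrightarrow>
   l * q P1 m1 m2 + (1-l) * q P2 m1 m2 \<le> g m1 m2"
proof -
  assume a: "P1 \<in> Ps" "P2 \<in> Ps" "0 \<le> l" "l \<le> 1"
  have "l * q P1 m1 m2 \<le> l * g m1 m2" "(1-l) * q P2 m1 m2 \<le> (1-l) * g m1 m2"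
    using a g_ge by (auto intro!: mult_left_mono)
  then show ?thesis by (simp add: algebra_simps)
qed

definition "hh \<beta> = (INF \<alpha>. f \<alpha> \<beta>)"
definition "iota m2 = (INF m1\<in>{lof Ps x..hif Ps x}. g m1 m2)"

lemma hh_le: "hh \<beta> \<le> f \<alpha> \<beta>" unfolding hh_def by (rule cINF_lower[OF f_bdd]) simp

lemma main_core:
  shows "(\<forall>\<beta>. \<exists>\<alpha>0\<in>{ul..uh}. \<forall>\<alpha>. f \<alpha>0 \<beta> \<le> f \<alpha> \<beta>)
    \<and> (\<exists>\<beta>0\<in>{vl..vh}. (INF \<alpha>. f \<alpha> \<beta>0) = Cf Ps x y a)
    \<and> (\<forall>\<beta>. (INF \<alpha>. f \<alpha> \<beta>) \<le> Cf Ps x y a)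
    \<and> (\<exists>\<alpha>\<in>{ul..uh}. \<exists>\<beta>\<in>{vl..vh}. Cf Ps x y a = f \<alpha> \<beta>)"
proof -
  let ?XI = "{lof Ps x..hif Ps x}" and ?YI = "{lof Ps y..hif Ps y}"
  define C where "C = Cf Ps x y a"
  have C_def': "C = (SUP m2\<in>?YI. iota m2)" unfolding C_def Cf_def iota_def ..
  have hh_lip: "hh s \<le> hh t + \<bar>s - t\<bar> * (\<bar>s\<bar> + \<bar>t\<bar> + 2*K)" for s t
  proof -
    have "hh s - \<bar>s - t\<bar> * (\<bar>s\<bar> + \<bar>t\<bar> + 2*K) \<le> hh t"
      unfolding hh_def[of t]
    proof (rule cINF_greatest)
      fix \<alpha>
      show "hh s - \<bar>s - t\<bar> * (\<bar>s\<bar> + \<bar>t\<bar> + 2*K) \<le> f \<alpha> t"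
        using hh_le[of s \<alpha>] f_lip_beta[of \<alpha> s t] by linarith
    qed simp
    then show ?thesis by linarith
  qed
  have "continuous_on {vl..vh} hh" by (rule lip_cont) (rule hh_lip)
  from continuous_attains_sup[OF compact_Icc _ this] v_lohi(2)
  obtain \<beta>0 where b0: "\<beta>0 \<in> {vl..vh}" "\<And>\<beta>. \<beta> \<in> {vl..vh} \<Longrightarrow> hh \<beta> \<le> hh \<beta>0" by auto
  have mixR: "l*a P1 + (1-l)*a P2 - (l*x P1 + (1-l)*x P2) * (l*y P1 + (1-l)*y P2) \<le> hh \<beta>0"
    if P: "P1 \<in> Ps" "P2 \<in> Ps" and l: "0 \<le> l" "l \<le> 1" for P1 P2 l
  proof -
    define xm where "xm = l*x P1 + (1-l)*x P2"
    define ym where "ym = l*y P1 + (1-l)*y P2"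
    define am where "am = l*a P1 + (1-l)*a P2"
    define vm where "vm = l * v P1 + (1-l) * v P2"
    have vm': "vm = (xm - ym)/2" unfolding vm_def xm_def ym_def vf_def by (simp add: field_simps)
    have vmI: "vm \<in> {vl..vh}" unfolding vm_def using v_lohi(1)[OF P(1)] v_lohi(1)[OF P(2)] l by (rule mix_in)
    have "am - xm*ym \<le> hh vm" unfolding hh_def
    proof (rule cINF_greatest)
      fix \<alpha>
      have "l * q P1 (\<alpha>+vm) (\<alpha>-vm) + (1-l) * q P2 (\<alpha>+vm) (\<alpha>-vm)
          = am - (\<alpha>-vm)*xm - (\<alpha>+vm)*ym + (\<alpha>+vm)*(\<alpha>-vm)"
        unfolding qf_def am_def xm_def ym_def by (simp add: algebra_simps)
      also have "\<dots> = (\<alpha> - (xm+ym)/2)^2 + (am - xm*ym)"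
        unfolding vm' by (simp add: power2_eq_square field_simps)
      also have "\<dots> \<ge> am - xm*ym" by simp
      finally show "am - xm*ym \<le> f \<alpha> vm" using f_ge_mix[OF P l] by (meson order_trans)
    qed simp
    also have "\<dots> \<le> hh \<beta>0" using b0(2)[OF vmI] .
    finally show ?thesis unfolding am_def xm_def ym_def .
  qed
  have iota_bdd: "bdd_below ((\<lambda>m1. g m1 m2) ` ?XI)" for m2
  proof -
    obtain P where P: "P \<in> Ps" using ne by auto
    show ?thesis
    proof (rule bdd_belowI[where m="- (K + \<bar>m2\<bar>*K + K*K + K*\<bar>m2\<bar>)"])
      fix z assume "z \<in> (\<lambda>m1. g m1 m2) ` ?XI"
      then obtain m1 where m1: "m1 \<in> ?XI" "z = g m1 m2" by auto
      have "\<bar>m1\<bar> \<le> K" using m1(1) x_K by auto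
      hence "\<bar>m1\<bar>*K \<le> K*K" "\<bar>m1\<bar>*\<bar>m2\<bar> \<le> K*\<bar>m2\<bar>" using K0 by (auto intro: mult_right_mono)
      then show "- (K + \<bar>m2\<bar>*K + K*K + K*\<bar>m2\<bar>) \<le> z"
        using abs_le_D2[OF q_abs[OF P, of m1 m2]] g_ge[OF P, of m1 m2] m1(2) mult.commute[of "\<bar>m2\<bar>" K]
        by linarith
    qed
  qed
  have iota_le: "iota m2 \<le> hh \<beta>0" if m2: "m2 \<in> ?YI" for m2
  proof (rule ccontr)
    assume "\<not> iota m2 \<le> hh \<beta>0"
    hence lt: "hh \<beta>0 < iota m2" by simp
    have cov: "\<exists>P\<in>Ps. 0*t^2 + (m2 - y P)*t + (a P - m2 * x P) > hh \<beta>0" if t: "t \<in> ?XI" for t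
    proof -
      have "iota m2 \<le> g t m2" unfolding iota_def by (rule cINF_lower[OF iota_bdd t])
      then obtain P where "P \<in> Ps" "hh \<beta>0 < q P t m2" using g_lessI lt by (meson less_le_trans)
      then show ?thesis unfolding qG by blast
    qed
    from minimax1d[of 0 "lof Ps x" "hif Ps x" Ps "hh \<beta>0" "\<lambda>P. m2 - y P" "\<lambda>P. a P - m2 * x P", OF _ cov x_lohi(2)]
    obtain P1 P2 l where P: "P1 \<in> Ps" "P2 \<in> Ps" and l: "0 \<le> l" "l \<le> 1"
      and H: "\<forall>t\<in>?XI. l*(0*t^2 + (m2 - y P1)*t + (a P1 - m2 * x P1))
                    + (1-l)*(0*t^2 + (m2 - y P2)*t + (a P2 - m2 * x P2)) > hh \<beta>0" by auto
    define xm where "xm = l*x P1 + (1-l)*x P2"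
    have xmI: "xm \<in> ?XI" unfolding xm_def using x_lohi(1)[OF P(1)] x_lohi(1)[OF P(2)] l by (rule mix_in)
    have "l*(0*xm^2 + (m2 - y P1)*xm + (a P1 - m2 * x P1))
                    + (1-l)*(0*xm^2 + (m2 - y P2)*xm + (a P2 - m2 * x P2))
        = l*a P1 + (1-l)*a P2 - (l*x P1 + (1-l)*x P2) * (l*y P1 + (1-l)*y P2)"
      unfolding xm_def by (simp add: algebra_simps)
    then show False using H xmI mixR[OF P l] by fastforce
  qed
  have YIne: "?YI \<noteq> {}" using y_lohi(2) by auto
  have XIne: "?XI \<noteq> {}" using x_lohi(2) by auto
  have C_le: "C \<le> hh \<beta>0" unfolding C_def' by (rule cSUP_least[OF YIne iota_le])
  have iota_bdd2: "bdd_above (iota ` ?YI)" using iota_le by (intro bdd_aboveI[where M="hh \<beta>0"]) auto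
  have mixC: "l*a P1 + (1-l)*a P2 - (l*x P1 + (1-l)*x P2) * (l*y P1 + (1-l)*y P2) \<le> C"
    if P: "P1 \<in> Ps" "P2 \<in> Ps" and l: "0 \<le> l" "l \<le> 1" for P1 P2 l
  proof -
    define xm where "xm = l*x P1 + (1-l)*x P2"
    define ym where "ym = l*y P1 + (1-l)*y P2"
    define am where "am = l*a P1 + (1-l)*a P2"
    have ymI: "ym \<in> ?YI" unfolding ym_def using y_lohi(1)[OF P(1)] y_lohi(1)[OF P(2)] l by (rule mix_in)
    have "am - xm*ym \<le> iota ym" unfolding iota_def
    proof (rule cINF_greatest[OF XIne])
      fix m1
      have "l * q P1 m1 ym + (1-l) * q P2 m1 ym = am - xm*ym"
        unfolding qf_def am_def xm_def ym_def by (simp add: algebra_simps)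
      then show "am - xm*ym \<le> g m1 ym" using f_ge_mix[OF P l, of m1 ym] by linarith
    qed
    also have "\<dots> \<le> C" unfolding C_def' by (rule cSUP_upper[OF ymI iota_bdd2])
    finally show ?thesis unfolding am_def xm_def ym_def .
  qed
  have hh_C: "hh \<beta> \<le> C" for \<beta>
  proof (rule ccontr)
    assume "\<not> hh \<beta> \<le> C"
    hence lt: "C < hh \<beta>" by simp
    have cov: "\<exists>P\<in>Ps. 1*t^2 + (-2 * u P)*t + (a P - \<beta>^2 + 2*\<beta> * v P) > C" if t: "t \<in> {ul..uh}" for t
    proof -
      have "C < f t \<beta>" using hh_le[of \<beta> t] lt by linarith
      then obtain P where "P \<in> Ps" "C < q P (t+\<beta>) (t-\<beta>)" using g_lessI by blast
      then show ?thesis unfolding qF2 by blast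
    qed
    from minimax1d[of 1 ul uh Ps C "\<lambda>P. -2 * u P" "\<lambda>P. a P - \<beta>^2 + 2*\<beta> * v P", OF _ cov u_lohi(2)]
    obtain P1 P2 l where P: "P1 \<in> Ps" "P2 \<in> Ps" and l: "0 \<le> l" "l \<le> 1"
      and H: "\<forall>t\<in>{ul..uh}. l*(1*t^2 + (-2 * u P1)*t + (a P1 - \<beta>^2 + 2*\<beta> * v P1))
                    + (1-l)*(1*t^2 + (-2 * u P2)*t + (a P2 - \<beta>^2 + 2*\<beta> * v P2)) > C" by auto
    define xm where "xm = l*x P1 + (1-l)*x P2"
    define ym where "ym = l*y P1 + (1-l)*y P2"
    define am where "am = l*a P1 + (1-l)*a P2"
    define um where "um = l * u P1 + (1-l) * u P2"
    have umI: "um \<in> {ul..uh}" unfolding um_def using u_lohi(1)[OF P(1)] u_lohi(1)[OF P(2)] l by (rule mix_in)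
    have "l*(1*um^2 + (-2 * u P1)*um + (a P1 - \<beta>^2 + 2*\<beta> * v P1))
                    + (1-l)*(1*um^2 + (-2 * u P2)*um + (a P2 - \<beta>^2 + 2*\<beta> * v P2))
        = am - xm*ym - (\<beta> - (xm - ym)/2)^2"
      unfolding um_def am_def xm_def ym_def uf_def vf_def by (simp add: power2_eq_square field_simps)
    also have "\<dots> \<le> am - xm*ym" by simp
    also have "\<dots> \<le> C" unfolding am_def xm_def ym_def by (rule mixC[OF P l])
    finally show False using H umI by fastforce
  qed
  have hb0: "hh \<beta>0 = C" using hh_C[of \<beta>0] C_le by simp
  obtain \<alpha>0 where a0: "\<alpha>0 \<in> {ul..uh}" "\<And>\<alpha>. f \<alpha>0 \<beta>0 \<le> f \<alpha> \<beta>0" using f_min by blast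
  have "hh \<beta>0 = f \<alpha>0 \<beta>0" unfolding hh_def by (rule cInf_eq_minimum) (use a0 in auto)
  show ?thesis
  proof (intro conjI)
    show "\<forall>\<beta>. \<exists>\<alpha>0\<in>{ul..uh}. \<forall>\<alpha>. f \<alpha>0 \<beta> \<le> f \<alpha> \<beta>" using f_min by blast
    show "\<exists>\<beta>0\<in>{vl..vh}. (INF \<alpha>. f \<alpha> \<beta>0) = Cf Ps x y a" using b0(1) hb0 unfolding hh_def C_def by blast
    show "\<forall>\<beta>. (INF \<alpha>. f \<alpha> \<beta>) \<le> Cf Ps x y a" using hh_C unfolding hh_def C_def by blast
    show "\<exists>\<alpha>\<in>{ul..uh}. \<exists>\<beta>\<in>{vl..vh}. Cf Ps x y a = f \<alpha> \<beta>"
      using a0(1) b0(1) hb0 \<open>hh \<beta>0 = f \<alpha>0 \<beta>0\<close> unfolding C_def by metis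
  qed
qed

end

lemma per_P:
  fixes X Y :: "'a \<Rightarrow> real"
  assumes P: "prob_space P" and Xm: "X \<in> borel_measurable P" and Ym: "Y \<in> borel_measurable P"
    and X2: "integrable P (\<lambda>w. (X w)^2)" and Y2: "integrable P (\<lambda>w. (Y w)^2)"
  shows "integrable P X" "integrable P Y" "integrable P (\<lambda>w. X w * Y w)"
    "\<bar>integral\<^sup>L P X\<bar> \<le> 1 + integral\<^sup>L P (\<lambda>w. (X w)^2)"
    "\<bar>integral\<^sup>L P Y\<bar> \<le> 1 + integral\<^sup>L P (\<lambda>w. (Y w)^2)"
    "\<bar>integral\<^sup>L P (\<lambda>w. X w * Y w)\<bar> \<le> integral\<^sup>L P (\<lambda>w. (X w)^2) + integral\<^sup>L P (\<lambda>w. (Y w)^2)"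
    "0 \<le> integral\<^sup>L P (\<lambda>w. (X w)^2)"
proof -
  interpret prob_space P by (rule P)
  show iX: "integrable P X" by (rule square_integrable_imp_integrable[OF Xm X2])
  show iY: "integrable P Y" by (rule square_integrable_imp_integrable[OF Ym Y2])
  have b1: "\<bar>t\<bar> \<le> 1 + t^2" for t :: real
  proof (cases "\<bar>t\<bar> \<le> 1")
    case True then show ?thesis by (smt (verit) zero_le_power2)
  next
    case False
    have "\<bar>t\<bar> * 1 \<le> \<bar>t\<bar> * \<bar>t\<bar>" using False by (intro mult_left_mono) auto
    also have "\<dots> = t^2" by (simp add: power2_eq_square abs_mult_self_eq)
    finally show ?thesis by simp
  qed
  have b1a: "t \<le> 1 + t^2" "-t \<le> 1 + t^2" for t :: real
    using b1[of t] abs_ge_self[of t] abs_ge_minus_self[of t] by linarith+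
  have b2: "\<bar>s*t\<bar> \<le> s^2 + t^2" for s t :: real
  proof -
    have "0 \<le> (\<bar>s\<bar> - \<bar>t\<bar>)^2" by simp
    also have "(\<bar>s\<bar> - \<bar>t\<bar>)^2 = \<bar>s\<bar>*\<bar>s\<bar> + \<bar>t\<bar>*\<bar>t\<bar> - 2*(\<bar>s\<bar>*\<bar>t\<bar>)"
      by (simp add: power2_eq_square algebra_simps)
    finally have "2*(\<bar>s\<bar>*\<bar>t\<bar>) \<le> s^2 + t^2" by (simp add: abs_mult_self_eq power2_eq_square)
    moreover have "0 \<le> \<bar>s\<bar>*\<bar>t\<bar>" by simp
    ultimately have "\<bar>s\<bar>*\<bar>t\<bar> \<le> s^2 + t^2" by linarith
    then show ?thesis by (simp add: abs_mult)
  qed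
  have b2a: "s*t \<le> s^2 + t^2" "-(s*t) \<le> s^2 + t^2" for s t :: real
    using b2[of s t] abs_ge_self[of "s*t"] abs_ge_minus_self[of "s*t"] by linarith+
  show iXY: "integrable P (\<lambda>w. X w * Y w)"
    by (rule Bochner_Integration.integrable_bound[where f="\<lambda>w. (X w)^2 + (Y w)^2"]) (use X2 Y2 Xm Ym b2 in auto)
  have i1: "integrable P (\<lambda>w. 1 + (X w)^2)" "integrable P (\<lambda>w. 1 + (Y w)^2)" using X2 Y2 by auto
  have "integral\<^sup>L P X \<le> integral\<^sup>L P (\<lambda>w. 1 + (X w)^2)" by (rule integral_mono[OF iX i1(1)]) (use b1a in fastforce)
  moreover have "integral\<^sup>L P (\<lambda>w. - X w) \<le> integral\<^sup>L P (\<lambda>w. 1 + (X w)^2)" by (rule integral_mono) (use iX i1 b1a in fastforce)+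
  ultimately show "\<bar>integral\<^sup>L P X\<bar> \<le> 1 + integral\<^sup>L P (\<lambda>w. (X w)^2)" using X2 prob_space by (simp add: abs_le_iff)
  have "integral\<^sup>L P Y \<le> integral\<^sup>L P (\<lambda>w. 1 + (Y w)^2)" by (rule integral_mono[OF iY i1(2)]) (use b1a in fastforce)
  moreover have "integral\<^sup>L P (\<lambda>w. - Y w) \<le> integral\<^sup>L P (\<lambda>w. 1 + (Y w)^2)" by (rule integral_mono) (use iY i1 b1a in fastforce)+
  ultimately show "\<bar>integral\<^sup>L P Y\<bar> \<le> 1 + integral\<^sup>L P (\<lambda>w. (Y w)^2)" using Y2 prob_space by (simp add: abs_le_iff)
  have i2: "integrable P (\<lambda>w. (X w)^2 + (Y w)^2)" using X2 Y2 by auto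
  have "integral\<^sup>L P (\<lambda>w. X w * Y w) \<le> integral\<^sup>L P (\<lambda>w. (X w)^2 + (Y w)^2)"
    by (rule integral_mono[OF iXY i2]) (use b2a in fastforce)
  moreover have "integral\<^sup>L P (\<lambda>w. - (X w * Y w)) \<le> integral\<^sup>L P (\<lambda>w. (X w)^2 + (Y w)^2)"
    by (rule integral_mono) (use iXY i2 b2a in fastforce)+
  ultimately show "\<bar>integral\<^sup>L P (\<lambda>w. X w * Y w)\<bar> \<le> integral\<^sup>L P (\<lambda>w. (X w)^2) + integral\<^sup>L P (\<lambda>w. (Y w)^2)"
    using X2 Y2 by (simp add: abs_le_iff)
  show "0 \<le> integral\<^sup>L P (\<lambda>w. (X w)^2)" by (rule integral_nonneg_AE) auto
qed


lemma lohi_cong: "(\<And>P. P \<in> Ps \<Longrightarrow> z P = z' P) \<Longrightarrow> lof Ps z = lof Ps z' \<and> hif Ps z = hif Ps z'"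
  unfolding lof_def hif_def by (metis (no_types, lifting) SUP_cong)

lemma mean_set_eq:
  assumes "\<And>P. P \<in> Ps \<Longrightarrow> integral\<^sup>L P Z = z P"
  shows "mean_set Ps Z = {lof Ps z..hif Ps z}"
proof -
  have "sub_exp Ps Z = hif Ps z" unfolding sub_exp_def hif_def using assms by (intro SUP_cong) auto
  moreover have "sub_exp Ps (\<lambda>w. - Z w) = (SUP P\<in>Ps. - z P)"
    unfolding sub_exp_def using assms by (intro SUP_cong) auto
  ultimately show ?thesis unfolding mean_set_def lower_mean_def upper_mean_def lof_def by simp
qed

lemma part_i:
  fixes M :: "'a measure" and Ps :: "'a measure set" and X Y :: "'a \<Rightarrow> real"
  assumes Ps_ne: "Ps \<noteq> {}"
    and Ps_prob: "\<And>P. P \<in> Ps \<Longrightarrow> prob_space P \<and> sets P = sets M"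
    and X_meas: "X \<in> borel_measurable M" and Y_meas: "Y \<in> borel_measurable M"
    and X_sq: "\<And>P. P \<in> Ps \<Longrightarrow> integrable P (\<lambda>w. (X w)^2)"
    and Y_sq: "\<And>P. P \<in> Ps \<Longrightarrow> integrable P (\<lambda>w. (Y w)^2)"
    and X_bdd: "bdd_above ((\<lambda>P. integral\<^sup>L P (\<lambda>w. (X w)^2)) ` Ps)"
    and Y_bdd: "bdd_above ((\<lambda>P. integral\<^sup>L P (\<lambda>w. (Y w)^2)) ` Ps)"
  shows
    "is_maxmin (upper_cov Ps X Y)
        (\<lambda>\<beta> \<alpha>. sub_exp Ps (\<lambda>w. ((X w + Y w) / 2 - \<alpha>)^2 - ((X w - Y w) / 2 - \<beta>)^2))
     \<and> (\<exists>\<alpha>s\<in>mean_set Ps (\<lambda>w. (X w + Y w) / 2). \<exists>\<beta>s\<in>mean_set Ps (\<lambda>w. (X w - Y w) / 2).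
          upper_cov Ps X Y = sub_exp Ps (\<lambda>w. ((X w + Y w) / 2 - \<alpha>s)^2 - ((X w - Y w) / 2 - \<beta>s)^2))"
proof -
  define x where "x P = integral\<^sup>L P X" for P
  define y where "y P = integral\<^sup>L P Y" for P
  define a where "a P = integral\<^sup>L P (\<lambda>w. X w * Y w)" for P
  have meas: "X \<in> borel_measurable P" "Y \<in> borel_measurable P" if "P \<in> Ps" for P
    using measurable_cong_sets[of P M borel borel] Ps_prob[OF that] X_meas Y_meas by auto
  have pp: "integrable P X" "integrable P Y" "integrable P (\<lambda>w. X w * Y w)"
    "\<bar>integral\<^sup>L P X\<bar> \<le> 1 + integral\<^sup>L P (\<lambda>w. (X w)^2)"
    "\<bar>integral\<^sup>L P Y\<bar> \<le> 1 + integral\<^sup>L P (\<lambda>w. (Y w)^2)"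
    "\<bar>integral\<^sup>L P (\<lambda>w. X w * Y w)\<bar> \<le> integral\<^sup>L P (\<lambda>w. (X w)^2) + integral\<^sup>L P (\<lambda>w. (Y w)^2)"
    "0 \<le> integral\<^sup>L P (\<lambda>w. (X w)^2)" if P: "P \<in> Ps" for P
    using per_P[OF conjunct1[OF Ps_prob[OF P]] meas[OF P] X_sq[OF P] Y_sq[OF P]] by auto
  obtain BX where BX: "\<And>P. P \<in> Ps \<Longrightarrow> integral\<^sup>L P (\<lambda>w. (X w)^2) \<le> BX"
    using X_bdd unfolding bdd_above_def by auto
  obtain BY where BY: "\<And>P. P \<in> Ps \<Longrightarrow> integral\<^sup>L P (\<lambda>w. (Y w)^2) \<le> BY"
    using Y_bdd unfolding bdd_above_def by auto
  define K where "K = 1 + \<bar>BX\<bar> + \<bar>BY\<bar>"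
  have y0: "0 \<le> integral\<^sup>L P (\<lambda>w. (Y w)^2)" if "P \<in> Ps" for P
    using per_P[OF conjunct1[OF Ps_prob[OF that]] meas(2,1)[OF that] Y_sq[OF that] X_sq[OF that]] by blast
  interpret core Ps x y a K
  proof
    show "Ps \<noteq> {}" by (rule Ps_ne)
    fix P assume P: "P \<in> Ps"
    show "\<bar>x P\<bar> \<le> K" using pp(4)[OF P] BX[OF P] abs_ge_self[of BX] abs_ge_zero[of BY] unfolding x_def K_def by linarith
    show "\<bar>y P\<bar> \<le> K" using pp(5)[OF P] BY[OF P] abs_ge_self[of BY] abs_ge_zero[of BX] unfolding y_def K_def by linarith
    show "\<bar>a P\<bar> \<le> K" using pp(6)[OF P] BX[OF P] BY[OF P] abs_ge_self[of BY] abs_ge_self[of BX] unfolding a_def K_def by linarith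
  qed
  have int_q: "integral\<^sup>L P (\<lambda>w. (X w - m1)*(Y w - m2)) = qf x y a P m1 m2" if P: "P \<in> Ps" for P m1 m2
  proof -
    interpret prob_space P using Ps_prob[OF P] by blast
    have e: "(\<lambda>w. (X w - m1)*(Y w - m2)) = (\<lambda>w. X w * Y w - m2 * X w - m1 * Y w + m1*m2)"
      by (auto simp: algebra_simps fun_eq_iff)
    show ?thesis unfolding e qf_def x_def y_def a_def using pp(1-3)[OF P] by (simp add: prob_space)
  qed
  have se_q: "sub_exp Ps (\<lambda>w. (X w - m1)*(Y w - m2)) = gf Ps x y a m1 m2" for m1 m2
    unfolding sub_exp_def gf_def using int_q by (intro SUP_cong) auto
  have se_F: "sub_exp Ps (\<lambda>w. ((X w + Y w) / 2 - \<alpha>)^2 - ((X w - Y w) / 2 - \<beta>)^2) = gf Ps x y a (\<alpha>+\<beta>) (\<alpha>-\<beta>)"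
    for \<alpha> \<beta>
  proof -
    have "(\<lambda>w. ((X w + Y w) / 2 - \<alpha>)^2 - ((X w - Y w) / 2 - \<beta>)^2) = (\<lambda>w. (X w - (\<alpha>+\<beta>))*(Y w - (\<alpha>-\<beta>)))"
      by (auto simp: fun_eq_iff power2_eq_square field_simps)
    then show ?thesis using se_q by simp
  qed
  have mX: "mean_set Ps X = {lof Ps x..hif Ps x}" by (rule mean_set_eq) (simp add: x_def)
  have mY: "mean_set Ps Y = {lof Ps y..hif Ps y}" by (rule mean_set_eq) (simp add: y_def)
  have mU: "mean_set Ps (\<lambda>w. (X w + Y w) / 2) = {ul..uh}" unfolding ul_def uh_def
  proof (rule mean_set_eq)
    fix P assume P: "P \<in> Ps"
    show "integral\<^sup>L P (\<lambda>w. (X w + Y w) / 2) = uf x y P"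
      unfolding uf_def x_def y_def using pp(1,2)[OF P] by simp
  qed
  have mV: "mean_set Ps (\<lambda>w. (X w - Y w) / 2) = {vl..vh}" unfolding vl_def vh_def
  proof (rule mean_set_eq)
    fix P assume P: "P \<in> Ps"
    show "integral\<^sup>L P (\<lambda>w. (X w - Y w) / 2) = vf x y P"
      unfolding vf_def x_def y_def using pp(1,2)[OF P] by simp
  qed
  have uc: "upper_cov Ps X Y = Cf Ps x y a" unfolding upper_cov_def Cf_def mX mY se_q ..
  show ?thesis unfolding uc se_F mU mV is_maxmin_def using main_core by blast
qed


lemma SUP_neg_real: "(SUP z\<in>A. - k z) = - (INF z\<in>A. k z :: real)"
  unfolding Inf_real_def by (simp add: image_image)

lemma upper_cov_negY: "upper_cov Ps X (\<lambda>w. - Y w) = - lower_cov Ps X Y"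
proof -
  have negY: "mean_set Ps (\<lambda>w. - Y w) = uminus ` mean_set Ps Y"
    unfolding mean_set_def lower_mean_def upper_mean_def by simp
  have e: "(\<lambda>w. (X w - m1) * (- Y w - - m2)) = (\<lambda>w. - ((X w - m1) * (Y w - m2)))" for m1 m2 :: real
    by (auto simp: fun_eq_iff algebra_simps)
  have "upper_cov Ps X (\<lambda>w. - Y w) = (SUP m2\<in>mean_set Ps Y. INF m1\<in>mean_set Ps X.
       sub_exp Ps (\<lambda>w. - ((X w - m1) * (Y w - m2))))"
    unfolding upper_cov_def negY image_image e ..
  also have "\<dots> = (SUP m2\<in>mean_set Ps Y. - (SUP m1\<in>mean_set Ps X.
       - sub_exp Ps (\<lambda>w. - ((X w - m1) * (Y w - m2)))))"
    by (simp add: SUP_neg_real)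
  also have "\<dots> = - lower_cov Ps X Y" unfolding lower_cov_def by (rule SUP_neg_real)
  finally show ?thesis .
qed

theorem lemma3p14:
  fixes M :: "'a measure" and Ps :: "'a measure set" and X Y :: "'a \<Rightarrow> real"
  assumes Ps_ne: "Ps \<noteq> {}"
    and Ps_prob: "\<And>P. P \<in> Ps \<Longrightarrow> prob_space P \<and> sets P = sets M"
    and X_meas: "X \<in> borel_measurable M" and Y_meas: "Y \<in> borel_measurable M"
    and X_sq: "\<And>P. P \<in> Ps \<Longrightarrow> integrable P (\<lambda>w. (X w)^2)"
    and Y_sq: "\<And>P. P \<in> Ps \<Longrightarrow> integrable P (\<lambda>w. (Y w)^2)"
    and X_bdd: "bdd_above ((\<lambda>P. integral\<^sup>L P (\<lambda>w. (X w)^2)) ` Ps)"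
    and Y_bdd: "bdd_above ((\<lambda>P. integral\<^sup>L P (\<lambda>w. (Y w)^2)) ` Ps)"
  defines "U \<equiv> (\<lambda>w. (X w + Y w) / 2)" and "V \<equiv> (\<lambda>w. (X w - Y w) / 2)"
  shows
    "is_maxmin (upper_cov Ps X Y)
        (\<lambda>\<beta> \<alpha>. sub_exp Ps (\<lambda>w. (U w - \<alpha>)^2 - (V w - \<beta>)^2))
     \<and> (\<exists>\<alpha>s\<in>mean_set Ps U. \<exists>\<beta>s\<in>mean_set Ps V.
          upper_cov Ps X Y = sub_exp Ps (\<lambda>w. (U w - \<alpha>s)^2 - (V w - \<beta>s)^2))
     \<and> is_minmax (lower_cov Ps X Y)
        (\<lambda>\<alpha> \<beta>. - sub_exp Ps (\<lambda>w. - ((U w - \<alpha>)^2) + (V w - \<beta>)^2))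
     \<and> (\<exists>\<alpha>s\<in>mean_set Ps U. \<exists>\<beta>s\<in>mean_set Ps V.
          lower_cov Ps X Y = - sub_exp Ps (\<lambda>w. - ((U w - \<alpha>s)^2) + (V w - \<beta>s)^2))"
proof -
  note i1 = part_i[OF Ps_ne Ps_prob X_meas Y_meas X_sq Y_sq X_bdd Y_bdd]
  have Ym: "(\<lambda>w. - Y w) \<in> borel_measurable M" using Y_meas by simp
  have Y2': "\<And>P. P\<in>Ps \<Longrightarrow> integrable P (\<lambda>w. (- Y w)^2)" using Y_sq by simp
  have Yb': "bdd_above ((\<lambda>P. integral\<^sup>L P (\<lambda>w. (- Y w)^2)) ` Ps)" using Y_bdd by simp
  note i2 = part_i[OF Ps_ne Ps_prob X_meas Ym X_sq Y2' X_bdd Yb']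
  define G where "G a b = sub_exp Ps (\<lambda>w. (V w - a)^2 - (U w - b)^2)" for a b
  have A: "is_maxmin (upper_cov Ps X Y) (\<lambda>\<beta> \<alpha>. sub_exp Ps (\<lambda>w. (U w - \<alpha>)^2 - (V w - \<beta>)^2))
     \<and> (\<exists>\<alpha>s\<in>mean_set Ps U. \<exists>\<beta>s\<in>mean_set Ps V.
          upper_cov Ps X Y = sub_exp Ps (\<lambda>w. (U w - \<alpha>s)^2 - (V w - \<beta>s)^2))"
    using i1 unfolding U_def V_def by simp
  have eU: "(\<lambda>w. (X w + - Y w) / 2) = V" unfolding V_def by simp
  have eV: "(\<lambda>w. (X w - - Y w) / 2) = U" unfolding U_def by simp
  have eG: "sub_exp Ps (\<lambda>w. ((X w + - Y w) / 2 - a)^2 - ((X w - - Y w) / 2 - b)^2) = G a b" for a b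
    unfolding G_def U_def V_def by simp
  have B: "is_maxmin (- lower_cov Ps X Y) (\<lambda>b a. G a b)
     \<and> (\<exists>as\<in>mean_set Ps V. \<exists>bs\<in>mean_set Ps U. - lower_cov Ps X Y = G as bs)"
    using i2 unfolding eG eU eV upper_cov_negY .
  have eF: "(\<lambda>w. - ((U w - \<alpha>)^2) + (V w - \<beta>)^2) = (\<lambda>w. (V w - \<beta>)^2 - (U w - \<alpha>)^2)" for \<alpha> \<beta>
    by (rule ext) simp
  have C: "is_minmax (lower_cov Ps X Y) (\<lambda>\<alpha> \<beta>. - G \<beta> \<alpha>)
     \<and> (\<exists>\<alpha>s\<in>mean_set Ps U. \<exists>\<beta>s\<in>mean_set Ps V. lower_cov Ps X Y = - G \<beta>s \<alpha>s)"
  proof -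
    from B have B1: "\<forall>b. \<exists>a0. \<forall>a. G a0 b \<le> G a b" and B2: "\<exists>b0. (INF a. G a b0) = - lower_cov Ps X Y"
      and B3: "\<forall>b. (INF a. G a b) \<le> - lower_cov Ps X Y"
      and B4: "\<exists>as\<in>mean_set Ps V. \<exists>bs\<in>mean_set Ps U. - lower_cov Ps X Y = G as bs"
      unfolding is_maxmin_def by auto
    have "\<forall>a. \<exists>b0. \<forall>b. - G b a \<le> - G b0 a" using B1 by (meson neg_le_iff_le)
    moreover have "\<exists>a0. (SUP b. - G b a0) = lower_cov Ps X Y" proof -
      obtain b0 where "(INF a. G a b0) = - lower_cov Ps X Y" using B2 by blast
      then have "(SUP b. - G b b0) = lower_cov Ps X Y" by (simp add: SUP_neg_real)
      then show ?thesis by blast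
    qed
    moreover have "\<forall>a. lower_cov Ps X Y \<le> (SUP b. - G b a)" proof
      fix a0
      have "(INF a. G a a0) \<le> - lower_cov Ps X Y" using B3 by blast
      then show "lower_cov Ps X Y \<le> (SUP b. - G b a0)" by (simp add: SUP_neg_real)
    qed
    moreover have "\<exists>\<alpha>s\<in>mean_set Ps U. \<exists>\<beta>s\<in>mean_set Ps V. lower_cov Ps X Y = - G \<beta>s \<alpha>s"
      using B4 by (metis minus_minus)
    ultimately show ?thesis unfolding is_minmax_def by blast
  qed
  show ?thesis unfolding eF using A C unfolding G_def by blast
qed
end
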